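(* For every $t>0$, the operator $B(t)=W(1)\circ DH(v(\cdot;t))\circ W(t)$ acting on $X_1$ has the same eigenvalues as $\tilde A(t)$ acting on $X_t$: $\lambda$ is an eigenvalue of $B(t)$ (i.e. $B(t)[u]=\lambda u$ for some nonzero $u\in X_1$) if and only if $\lambda$ is an eigenvalue of $\tilde A(t)$ (i.e. $\tilde A(t)[w]=\lambda w$ for some nonzero $w\in X_t$).
   Context: Fix $n\ge2$, $d>0$. $Q(t)=\frac{1-t^{n-1}}{1-t^n}$ ($t\ne1$), $Q(1)=\frac{n-1}n$; for $0\le x\le1$, $R(x;t)=\frac{1}{|1-t|}\sqrt{\left(\frac{(1-(1-t)x)^{n-1}}{1-Q(t)+Q(t)(1-(1-t)x)^n}\right)^2-1}$ ($t\ne1$), $R(x;1)=\sqrt{(n-1)(1-x)x}$; $\zeta(x;t)=\int_x^1R(\tilde x;t)^{-1}d\tilde x$, $\zeta(1;t)=0$, $P(t)=\zeta(0;t)$, $\zeta^{-1}(\cdot;t)$ the inverse of $x\mapsto\zeta(x;t)$; $v(z;t)=\frac{d}{P(t)}\left(1-(1-t)\zeta^{-1}\left(\frac{P(t)z}{d};t\right)\right)$, $z\in[0,d]$. For positive $C^2$ $f$, $H(f)=\frac{-f_{zz}}{(1+f_z^2)^{3/2}}+\frac{n-1}{f\sqrt{1+f_z^2}}$ and $DH(f)[w]=\frac{d}{ds}\big|_{s=0}H(f+sw)$. Let $X_t=\{w\in C^2[0,d]:\int_0^dwv(\cdot;t)^{n-1}dz=0,\ w_z(0)=w_z(d)=0\}$,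 $W(t)[u]=u-\frac{\int_0^du\,v(z;t)^{n-1}dz}{\int_0^dv(z;t)^{n-1}dz}$ (the projection onto $X_t$), and $\tilde A(t)=W(t)\circ DH(v(\cdot;t))$ on $X_t$. *)

theory Defs
  imports "HOL-Analysis.Analysis"
begin

text \<open>Functions on [0,d] are represented as real => real; only their values on {0..d}
  matter, and derivatives are taken within {0..d} (one-sided at the endpoints).\<close>

definition Qf :: "nat \<Rightarrow> real \<Rightarrow> real" where
  "Qf n t = (if t = 1 then (real n - 1) / real n else (1 - t ^ (n - 1)) / (1 - t ^ n))"

definition Rf :: "nat \<Rightarrow> real \<Rightarrow> real \<Rightarrow> real" where
  "Rf n x t = (if t = 1 then sqrt ((real n - 1) * (1 - x) * x)
     else 1 / \<bar>1 - t\<bar> * sqrt (((1 - (1 - t) * x) ^ (n - 1)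
            / (1 - Qf n t + Qf n t * (1 - (1 - t) * x) ^ n)) ^ 2 - 1))"

definition zeta :: "nat \<Rightarrow> real \<Rightarrow> real \<Rightarrow> real" where
  "zeta n x t = integral {x..1} (\<lambda>y. 1 / Rf n y t)"

definition Pf :: "nat \<Rightarrow> real \<Rightarrow> real" where
  "Pf n t = zeta n 0 t"

definition zeta_inv :: "nat \<Rightarrow> real \<Rightarrow> real \<Rightarrow> real" where
  "zeta_inv n s t = (THE x. x \<in> {0..1} \<and> zeta n x t = s)"

definition vf :: "nat \<Rightarrow> real \<Rightarrow> real \<Rightarrow> real \<Rightarrow> real" where
  "vf n d z t = d / Pf n t * (1 - (1 - t) * zeta_inv n (Pf n t * z / d) t)"

definition D1 :: "real \<Rightarrow> (real \<Rightarrow> real) \<Rightarrow> real \<Rightarrow> real" where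
  "D1 d f z = vector_derivative f (at z within {0..d})"

definition C2_on :: "real \<Rightarrow> (real \<Rightarrow> real) \<Rightarrow> bool" where
  "C2_on d w \<longleftrightarrow>
     (\<forall>z\<in>{0..d}. (w has_vector_derivative D1 d w z) (at z within {0..d})) \<and>
     (\<forall>z\<in>{0..d}. (D1 d w has_vector_derivative D1 d (D1 d w) z) (at z within {0..d})) \<and>
     continuous_on {0..d} (D1 d (D1 d w))"

definition Hop :: "nat \<Rightarrow> real \<Rightarrow> (real \<Rightarrow> real) \<Rightarrow> real \<Rightarrow> real" where
  "Hop n d f z = - D1 d (D1 d f) z / (1 + (D1 d f z)\<^sup>2) powr (3/2)
      + (real n - 1) / (f z * sqrt (1 + (D1 d f z)\<^sup>2))"

definition DH :: "nat \<Rightarrow> real \<Rightarrow> (real \<Rightarrow> real) \<Rightarrow> (real \<Rightarrow> real) \<Rightarrow> real \<Rightarrow> real" where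
  "DH n d f w z = deriv (\<lambda>s. Hop n d (\<lambda>y. f y + s * w y) z) 0"

definition Xsp :: "nat \<Rightarrow> real \<Rightarrow> real \<Rightarrow> (real \<Rightarrow> real) set" where
  "Xsp n d t = {w. C2_on d w \<and> integral {0..d} (\<lambda>z. w z * vf n d z t ^ (n - 1)) = 0
                 \<and> D1 d w 0 = 0 \<and> D1 d w d = 0}"

definition Wproj :: "nat \<Rightarrow> real \<Rightarrow> real \<Rightarrow> (real \<Rightarrow> real) \<Rightarrow> real \<Rightarrow> real" where
  "Wproj n d t u z = u z - integral {0..d} (\<lambda>y. u y * vf n d y t ^ (n - 1))
                            / integral {0..d} (\<lambda>y. vf n d y t ^ (n - 1))"

definition Atilde :: "nat \<Rightarrow> real \<Rightarrow> real \<Rightarrow> (real \<Rightarrow> real) \<Rightarrow> real \<Rightarrow> real" where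
  "Atilde n d t w = Wproj n d t (DH n d (\<lambda>z. vf n d z t) w)"

definition Bop :: "nat \<Rightarrow> real \<Rightarrow> real \<Rightarrow> (real \<Rightarrow> real) \<Rightarrow> real \<Rightarrow> real" where
  "Bop n d t u = Wproj n d 1 (DH n d (\<lambda>z. vf n d z t) (Wproj n d t u))"

end

theory Submission
  imports Defs
begin

lemma hvd_minus_const:
  "((\<lambda>z. u z - c) has_vector_derivative f') F \<longleftrightarrow> (u has_vector_derivative f') F"
proof
  assume "((\<lambda>z. u z - c) has_vector_derivative f') F"
  from has_vector_derivative_add[OF this has_vector_derivative_const[of c]]
  show "(u has_vector_derivative f') F" by simp
next
  assume "(u has_vector_derivative f') F"
  from has_vector_derivative_diff[OF this has_vector_derivative_const[of c]]
  show "((\<lambda>z. u z - c) has_vector_derivative f') F" by simp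
qed

lemma D1_minus_const: "D1 d (\<lambda>z. u z - c) = D1 d u"
  unfolding D1_def vector_derivative_def hvd_minus_const ..

lemma C2_minus_const: "C2_on d (\<lambda>z. u z - c) = C2_on d u"
  unfolding C2_on_def D1_minus_const hvd_minus_const ..

lemma C2_cont: "C2_on d u \<Longrightarrow> continuous_on {0..d} u"
  unfolding C2_on_def continuous_on_eq_continuous_within
  using has_vector_derivative_continuous by blast

lemma lin_int:
  fixes V u :: "real \<Rightarrow> real"
  assumes "continuous_on {0..d} V" "continuous_on {0..d} u"
  shows "integral {0..d} (\<lambda>y. (a * u y + b) * V y)
     = a * integral {0..d} (\<lambda>y. u y * V y) + b * integral {0..d} V"
proof -
  have i1: "(\<lambda>y. a * (u y * V y)) integrable_on {0..d}"
    by (intro integrable_continuous_interval continuous_intros assms)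
  have i2: "(\<lambda>y. b * V y) integrable_on {0..d}"
    by (intro integrable_continuous_interval continuous_intros assms)
  have "integral {0..d} (\<lambda>y. (a * u y + b) * V y)
      = integral {0..d} (\<lambda>y. a * (u y * V y) + b * V y)"
    by (simp add: algebra_simps)
  also have "\<dots> = integral {0..d} (\<lambda>y. a * (u y * V y)) + integral {0..d} (\<lambda>y. b * V y)"
    using integral_add[OF i1 i2] .
  finally show ?thesis by simp
qed

lemma hbound:
  fixes m :: nat and Q a b :: real
  assumes m: "m \<ge> 1" and Q: "0 < Q" "Q < 1" and ab: "0 < a" "a < b"
    and ha: "a ^ m - Q * a ^ Suc m - (1 - Q) = 0"
    and hb: "b ^ m - Q * b ^ Suc m - (1 - Q) = 0"
  shows "\<exists>e>0. \<forall>y\<in>{a..b}. e * ((y - a) * (b - y)) \<le> y ^ m - Q * y ^ Suc m - (1 - Q)"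
proof -
  define h where "h = (\<lambda>y::real. y ^ m - Q * y ^ Suc m - (1 - Q))"
  define h' where "h' = (\<lambda>y::real. y ^ (m - 1) * (real m - Q * (real m + 1) * y))"
  have der: "DERIV h y :> h' y" for y
  proof -
    have yeq: "y ^ (m - Suc 0) * y = y ^ m" "y * y ^ (m - Suc 0) = y ^ m" using m
      by (metis One_nat_def Suc_pred' less_eq_Suc_le power_Suc2 mult.commute)+
    have "DERIV h y :> real m * y ^ (m - 1) - Q * (real (Suc m) * y ^ m)"
      unfolding h_def by (auto intro!: derivative_eq_intros simp: yeq algebra_simps)
    moreover have "real m * y ^ (m - 1) - Q * (real (Suc m) * y ^ m) = h' y"
      unfolding h'_def using yeq by (simp add: algebra_simps)
    ultimately show ?thesis by simp
  qed
  define ys where "ys = real m / (Q * (real m + 1))"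
  have Qp: "Q * (real m + 1) > 0" using Q by simp
  have fpos: "real m - Q * (real m + 1) * y > 0 \<longleftrightarrow> y < ys" for y
    using Qp unfolding ys_def by (simp add: field_simps)
  have fneg: "real m - Q * (real m + 1) * y < 0 \<longleftrightarrow> y > ys" for y
    using Qp unfolding ys_def by (simp add: field_simps)
  have h'pos: "0 < y \<Longrightarrow> y < ys \<Longrightarrow> h' y > 0" for y
    unfolding h'_def using fpos by simp
  have h'neg: "0 < y \<Longrightarrow> y > ys \<Longrightarrow> h' y < 0" for y
    unfolding h'_def using fneg by (simp add: mult_pos_neg)
  have h0: "h a = 0" "h b = 0" using ha hb by (auto simp: h_def)
  have mvt: "x < y \<Longrightarrow> \<exists>z. x < z \<and> z < y \<and> h y - h x = (y - x) * h' z" for x y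
    using MVT2[of x y h h'] der by blast
  have "a < ys"
  proof (rule ccontr)
    assume "\<not> a < ys"
    obtain z where z: "a < z" "z < b" "h b - h a = (b - a) * h' z" using mvt[OF ab(2)] by blast
    have "h' z < 0" using h'neg[of z] z ab \<open>\<not> a < ys\<close> by simp
    thus False using z(3) h0 ab by (simp add: mult_pos_neg)
  qed
  have "ys < b"
  proof (rule ccontr)
    assume "\<not> ys < b"
    obtain z where z: "a < z" "z < b" "h b - h a = (b - a) * h' z" using mvt[OF ab(2)] by blast
    have "h' z > 0" using h'pos[of z] z ab \<open>\<not> ys < b\<close> by simp
    thus False using z(3) h0 ab by simp
  qed
  define m1 where "m1 = (a + ys) / 2"
  define m2 where "m2 = (ys + b) / 2"
  have m1: "a < m1" "m1 < ys" using \<open>a < ys\<close> by (auto simp: m1_def)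
  have m2: "ys < m2" "m2 < b" using \<open>ys < b\<close> by (auto simp: m2_def)
  define d1 where "d1 = a ^ (m - 1) * (real m - Q * (real m + 1) * m1)"
  define d2 where "d2 = a ^ (m - 1) * (Q * (real m + 1) * m2 - real m)"
  have d1: "d1 > 0" unfolding d1_def using fpos[of m1] m1 ab by simp
  have d2: "d2 > 0" unfolding d2_def using fneg[of m2] m2 ab by simp
  have c1: "h y \<ge> d1 * (y - a)" if y: "a \<le> y" "y \<le> m1" for y
  proof (cases "y = a")
    case True thus ?thesis using h0 by simp
  next
    case False
    then obtain z where z: "a < z" "z < y" "h y - h a = (y - a) * h' z" using mvt[of a y] y by auto
    have "a ^ (m - 1) \<le> z ^ (m - 1)" using z ab by (intro power_mono) auto
    moreover have "real m - Q * (real m + 1) * m1 \<le> real m - Q * (real m + 1) * z"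
      using Qp z y by (simp add: mult_left_mono)
    ultimately have "d1 \<le> h' z" unfolding d1_def h'_def
      using fpos[of m1] m1 ab z by (intro mult_mono) auto
    thus ?thesis using z h0 y by (simp add: mult_right_mono mult.commute)
  qed
  have c2: "h y \<ge> h m1" if y: "m1 \<le> y" "y \<le> ys" for y
  proof (cases "y = m1")
    case True thus ?thesis by simp
  next
    case False
    then obtain z where z: "m1 < z" "z < y" "h y - h m1 = (y - m1) * h' z" using mvt[of m1 y] y by auto
    have "h' z > 0" using h'pos[of z] z y m1 ab by simp
    hence "(y - m1) * h' z \<ge> 0" using z by simp
    thus ?thesis using z by linarith
  qed
  have c3: "h y \<ge> d2 * (b - y)" if y: "m2 \<le> y" "y \<le> b" for y
  proof (cases "y = b")
    case True thus ?thesis using h0 by simp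
  next
    case False
    then obtain z where z: "y < z" "z < b" "h b - h y = (b - y) * h' z" using mvt[of y b] y by auto
    have za: "a ^ (m - 1) \<le> z ^ (m - 1)" using z y m2 m1 ab by (intro power_mono) auto
    have "real m - Q * (real m + 1) * z \<le> real m - Q * (real m + 1) * m2"
      using Qp z y by (simp add: mult_left_mono)
    hence fz: "Q * (real m + 1) * m2 - real m \<le> - (real m - Q * (real m + 1) * z)" by simp
    have zp: "0 \<le> z ^ (m - 1)" using za ab by (meson order.trans zero_le_power less_imp_le)
    have "d2 \<le> - h' z" unfolding d2_def h'_def
      using fneg[of m2] m2 ab za fz zp by (simp only: mult_minus_right[symmetric]) (intro mult_mono, auto)
    hence "(b - y) * d2 \<le> (b - y) * (- h' z)" using y by (intro mult_left_mono) auto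
    thus ?thesis using z h0 by (simp add: algebra_simps)
  qed
  have c4: "h y \<ge> h m2" if y: "ys \<le> y" "y \<le> m2" for y
  proof (cases "y = m2")
    case True thus ?thesis by simp
  next
    case False
    then obtain z where z: "y < z" "z < m2" "h m2 - h y = (m2 - y) * h' z" using mvt[of y m2] y by auto
    have "h' z < 0" using h'neg[of z] z y m1 ab \<open>a < ys\<close> by simp
    hence "(m2 - y) * h' z \<le> 0" using z by (simp add: mult_nonneg_nonpos)
    thus ?thesis using z by linarith
  qed
  define L where "L = b - a"
  have L: "L > 0" using ab by (simp add: L_def)
  define e where "e = min (min (d1 / L) (d2 / L)) (min (d1 * (m1 - a) / L^2) (d2 * (b - m2) / L^2))"
  have e: "e > 0" unfolding e_def using d1 d2 L m1 m2 by auto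
  have "\<forall>y\<in>{a..b}. e * ((y - a) * (b - y)) \<le> h y"
  proof
    fix y assume y: "y \<in> {a..b}"
    define p where "p = (y - a) * (b - y)"
    have p0: "p \<ge> 0" using y by (auto simp: p_def)
    have pa: "p \<le> L * (y - a)" unfolding p_def L_def using y
      by (simp add: mult.commute[of "y - a"] mult_right_mono)
    have pb: "p \<le> L * (b - y)" unfolding p_def L_def using y by (simp add: mult_right_mono)
    have pL: "p \<le> L^2" using pa y L by (auto simp: L_def power2_eq_square intro: order.trans mult_left_mono)
    have "y \<le> m1 \<or> (m1 \<le> y \<and> y \<le> ys) \<or> (ys \<le> y \<and> y \<le> m2) \<or> m2 \<le> y" by linarith
    thus "e * p \<le> h y"
    proof (elim disjE conjE)
      assume "y \<le> m1"
      have "e * p \<le> (d1 / L) * p" using p0 by (intro mult_right_mono) (auto simp: e_def)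
      also have "\<dots> \<le> (d1 / L) * (L * (y - a))" using pa d1 L by (intro mult_left_mono) auto
      also have "\<dots> = d1 * (y - a)" using L by simp
      also have "\<dots> \<le> h y" using c1 \<open>y \<le> m1\<close> y by auto
      finally show ?thesis .
    next
      assume "m1 \<le> y" "y \<le> ys"
      have "e * p \<le> (d1 * (m1 - a) / L^2) * p" using p0 by (intro mult_right_mono) (auto simp: e_def)
      also have "\<dots> \<le> (d1 * (m1 - a) / L^2) * L^2" using pL d1 L m1 by (intro mult_left_mono) auto
      also have "\<dots> = d1 * (m1 - a)" using L by simp
      also have "\<dots> \<le> h m1" using c1[of m1] m1 by auto
      also have "\<dots> \<le> h y" using c2 \<open>m1 \<le> y\<close> \<open>y \<le> ys\<close> by auto
      finally show ?thesis .
    next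
      assume "ys \<le> y" "y \<le> m2"
      have "e * p \<le> (d2 * (b - m2) / L^2) * p" using p0 by (intro mult_right_mono) (auto simp: e_def)
      also have "\<dots> \<le> (d2 * (b - m2) / L^2) * L^2" using pL d2 L m2 by (intro mult_left_mono) auto
      also have "\<dots> = d2 * (b - m2)" using L by simp
      also have "\<dots> \<le> h m2" using c3[of m2] m2 by auto
      also have "\<dots> \<le> h y" using c4 \<open>ys \<le> y\<close> \<open>y \<le> m2\<close> by auto
      finally show ?thesis .
    next
      assume "m2 \<le> y"
      have "e * p \<le> (d2 / L) * p" using p0 by (intro mult_right_mono) (auto simp: e_def)
      also have "\<dots> \<le> (d2 / L) * (L * (b - y))" using pb d2 L by (intro mult_left_mono) auto
      also have "\<dots> = d2 * (b - y)" using L by simp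
      also have "\<dots> \<le> h y" using c3 \<open>m2 \<le> y\<close> y by auto
      finally show ?thesis .
    qed
  qed
  thus ?thesis using e unfolding h_def by blast
qed

lemma Q_props:
  fixes t :: real
  assumes n: "n \<ge> 2" and t: "t > 0" "t \<noteq> 1"
  shows "0 < Qf n t" "Qf n t < 1"
    "t ^ (n - 1) - Qf n t * t ^ n - (1 - Qf n t) = 0"
proof -
  obtain m where m: "n = Suc m" "m \<ge> 1" using n by (cases n) auto
  have tn: "t ^ n = t * t ^ m" using m by simp
  have nm: "n - 1 = m" using m by simp
  have nm': "n - Suc 0 = m" using m by simp
  have Q: "Qf n t = (1 - t ^ m) / (1 - t * t ^ m)" using t by (simp add: Qf_def tn nm')
  have "(0 < Qf n t \<and> Qf n t < 1) \<and> 1 - t * t ^ m \<noteq> 0"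
  proof (cases "t < 1")
    case True
    have p1: "t ^ m < 1" using True t m by (simp add: power_less_one_iff)
    have p0: "0 < t ^ m" using t by simp
    have "t * t ^ m < t ^ m" using True p0 by simp
    hence d: "0 < 1 - t ^ m" "1 - t ^ m < 1 - t * t ^ m" using p1 by auto
    thus ?thesis unfolding Q by (auto simp: divide_less_eq_1_pos)
  next
    case False
    hence T: "t > 1" using t by simp
    have p1: "t ^ m > 1" using T m by (simp add: one_less_power)
    have "t * t ^ m > 1 * t ^ m" using T p1 by (intro mult_strict_right_mono) auto
    hence "t * t ^ m > t ^ m" by simp
    hence d: "0 < t ^ m - 1" "t ^ m - 1 < t * t ^ m - 1" using p1 by linarith+
    have "(1 - t ^ m) / (1 - t * t ^ m) = (t ^ m - 1) / (t * t ^ m - 1)"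
      by (metis minus_diff_eq minus_divide_divide)
    have "0 < (t ^ m - 1) / (t * t ^ m - 1)" using d by (intro divide_pos_pos) linarith+
    moreover have "(t ^ m - 1) / (t * t ^ m - 1) < 1" using d by (subst divide_less_eq_1_pos) linarith+
    moreover have "1 - t * t ^ m \<noteq> 0" using d by linarith
    ultimately show ?thesis unfolding Q using \<open>(1 - t ^ m) / _ = _\<close> by simp
  qed
  thus "0 < Qf n t" "Qf n t < 1" by auto
  show "t ^ (n - 1) - Qf n t * t ^ n - (1 - Qf n t) = 0"
    using \<open>_ \<and> 1 - t * t ^ m \<noteq> 0\<close> unfolding Q nm tn by (simp add: field_simps)
qed

lemma R_props_ne1:
  fixes t :: real
  assumes n: "n \<ge> 2" and t: "t > 0" "t \<noteq> 1"
  shows "continuous_on {0..1} (\<lambda>x. Rf n x t)"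
    "\<exists>c>0. \<forall>x\<in>{0..1}. c * sqrt (x * (1 - x)) \<le> Rf n x t"
proof -
  obtain m where m: "n = Suc m" "m \<ge> 1" using n by (cases n) auto
  have nm: "n - 1 = m" using m by simp
  define Q where "Q = Qf n t"
  have Q: "0 < Q" "Q < 1" "t ^ m - Q * t ^ Suc m - (1 - Q) = 0"
    using Q_props[OF n t] by (simp_all add: Q_def nm m)
  define a where "a = min t 1"
  define b where "b = max t 1"
  have ab: "0 < a" "a < b" using t by (auto simp: a_def b_def)
  have hab: "a ^ m - Q * a ^ Suc m - (1 - Q) = 0" "b ^ m - Q * b ^ Suc m - (1 - Q) = 0"
    using Q(3) by (auto simp: a_def b_def min_def max_def)
  obtain e where e: "e > 0" "\<forall>y\<in>{a..b}. e * ((y - a) * (b - y)) \<le> y ^ m - Q * y ^ Suc m - (1 - Q)"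
    using hbound[OF m(2) Q(1,2) ab hab] by blast
  define D where "D = (\<lambda>y::real. 1 - Q + Q * y ^ Suc m)"
  define Dm where "Dm = D b"
  have Dpos: "D y > 0" if "y \<ge> 0" for y
    using Q that unfolding D_def by (smt (verit) mult_nonneg_nonneg zero_le_power)
  have Dle: "D y \<le> Dm" if "0 \<le> y" "y \<le> b" for y
  proof -
    have "y ^ Suc m \<le> b ^ Suc m" using that by (intro power_mono) auto
    hence "Q * y ^ Suc m \<le> Q * b ^ Suc m" using Q by (intro mult_left_mono) auto
    thus ?thesis unfolding Dm_def D_def by linarith
  qed
  have Dm: "Dm > 0" using Dpos ab unfolding Dm_def by simp
  have Rf_eq: "Rf n x t = 1 / \<bar>1 - t\<bar> * sqrt (((1 - (1 - t) * x) ^ m / D (1 - (1 - t) * x)) ^ 2 - 1)" for x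
    using t by (simp add: Rf_def nm D_def Q_def m)
  have yab: "1 - (1 - t) * x \<in> {a..b}" if "x \<in> {0..1}" for x
  proof (cases "t < 1")
    case True
    have "(1 - t) * x \<le> (1 - t) * 1" using True that by (intro mult_left_mono) auto
    hence "(1 - t) * x \<le> 1 - t" by (simp only: mult_1_right)
    moreover have "(1 - t) * x \<ge> 0" using True that by auto
    moreover have "a = t" "b = 1" using True by (auto simp: a_def b_def)
    ultimately show ?thesis unfolding atLeastAtMost_iff by linarith
  next
    case False
    have "(t - 1) * x \<le> (t - 1) * 1" using False that by (intro mult_left_mono) auto
    hence "(t - 1) * x \<le> t - 1" by (simp only: mult_1_right)
    moreover have "(t - 1) * x \<ge> 0" using False that by auto
    moreover have "a = 1" "b = t" using False by (auto simp: a_def b_def)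
    moreover have "(1 - t) * x = - ((t - 1) * x)" by (simp add: algebra_simps)
    ultimately show ?thesis unfolding atLeastAtMost_iff by linarith
  qed
  show "continuous_on {0..1} (\<lambda>x. Rf n x t)"
    unfolding Rf_eq
  proof (intro continuous_intros ballI)
    fix x :: real assume "x \<in> {0..1}"
    thus "D (1 - (1 - t) * x) \<noteq> 0" using yab[of x] ab Dpos[of "1 - (1 - t) * x"] by auto
  qed (auto simp: D_def intro!: continuous_intros)
  define c where "c = sqrt (e / Dm)"
  have c: "c > 0" using e Dm by (simp add: c_def)
  have "\<forall>x\<in>{0..1}. c * sqrt (x * (1 - x)) \<le> Rf n x t"
  proof
    fix x :: real assume x: "x \<in> {0..1}"
    define y where "y = 1 - (1 - t) * x"
    have y: "y \<in> {a..b}" using yab[OF x] by (simp add: y_def)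
    have y0: "y > 0" using y ab by simp
    have D0: "D y > 0" using Dpos y0 by simp
    have DDm: "D y \<le> Dm" using Dle y y0 by simp
    have p: "(y - a) * (b - y) = (1 - t)^2 * (x * (1 - x))"
      by (cases "t < 1") (auto simp: y_def a_def b_def min_def max_def power2_eq_square algebra_simps)
    have p0: "0 \<le> (1 - t)^2 * (x * (1 - x))" using x by simp
    define g where "g = y ^ m / D y"
    have "e * ((y - a) * (b - y)) \<le> y ^ m - Q * y ^ Suc m - (1 - Q)" using e(2) y by blast
    hence hy: "e * ((1 - t)^2 * (x * (1 - x))) \<le> y ^ m - D y"
      unfolding p D_def by linarith
    have "g - 1 = (y ^ m - D y) / D y" using D0 by (simp add: g_def field_simps)
    also have "\<dots> \<ge> e * ((1 - t)^2 * (x * (1 - x))) / Dm"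
    proof -
      have "e * ((1 - t)^2 * (x * (1 - x))) / Dm \<le> e * ((1 - t)^2 * (x * (1 - x))) / D y"
        using D0 DDm e p0 by (intro divide_left_mono) auto
      also have "\<dots> \<le> (y ^ m - D y) / D y" using hy D0 by (intro divide_right_mono) auto
      finally show ?thesis .
    qed
    finally have g1: "g - 1 \<ge> e * ((1 - t)^2 * (x * (1 - x))) / Dm" .
    have ge1: "g \<ge> 1" using g1 e Dm p0 by (smt (verit) divide_nonneg_pos mult_nonneg_nonneg)
    have "g * 1 \<le> g * g" using ge1 by (intro mult_left_mono) auto
    hence "g ^ 2 - 1 \<ge> g - 1" by (simp add: power2_eq_square)
    hence g2: "g ^ 2 - 1 \<ge> (e / Dm) * (1 - t)^2 * (x * (1 - x))" using g1 by simp
    have "Rf n x t = 1 / \<bar>1 - t\<bar> * sqrt (g ^ 2 - 1)" by (simp add: Rf_eq g_def y_def)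
    also have "\<dots> \<ge> 1 / \<bar>1 - t\<bar> * sqrt ((e / Dm) * (1 - t)^2 * (x * (1 - x)))"
      using g2 by (intro mult_left_mono real_sqrt_le_mono) auto
    also have "sqrt ((e / Dm) * (1 - t)^2 * (x * (1 - x))) = c * \<bar>1 - t\<bar> * sqrt (x * (1 - x))"
      by (simp only: c_def real_sqrt_mult real_sqrt_abs[symmetric])
    finally show "c * sqrt (x * (1 - x)) \<le> Rf n x t" using t by simp
  qed
  thus "\<exists>c>0. \<forall>x\<in>{0..1}. c * sqrt (x * (1 - x)) \<le> Rf n x t" using c by blast
qed

lemma R_props:
  fixes t :: real
  assumes n: "n \<ge> 2" and t: "t > 0"
  shows "continuous_on {0..1} (\<lambda>x. Rf n x t)"
    "\<exists>c>0. \<forall>x\<in>{0..1}. c * sqrt (x * (1 - x)) \<le> Rf n x t"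
proof -
  have "continuous_on {0..1} (\<lambda>x. Rf n x t) \<and> (\<exists>c>0. \<forall>x\<in>{0..1}. c * sqrt (x * (1 - x)) \<le> Rf n x t)"
  proof (cases "t = 1")
    case True
    have eq: "Rf n x t = sqrt (real n - 1) * sqrt (x * (1 - x))" for x
      using True by (simp add: Rf_def real_sqrt_mult[symmetric] algebra_simps)
    have "sqrt (real n - 1) > 0" using n by simp
    thus ?thesis unfolding eq by (intro conjI continuous_intros exI[of _ "sqrt (real n - 1)"]) auto
  next
    case False
    thus ?thesis using R_props_ne1[OF n t False] by blast
  qed
  thus "continuous_on {0..1} (\<lambda>x. Rf n x t)"
    "\<exists>c>0. \<forall>x\<in>{0..1}. c * sqrt (x * (1 - x)) \<le> Rf n x t" by blast+
qed

lemma base_int: "(\<lambda>x::real. 1 / sqrt (x * (1 - x))) integrable_on {0..1}"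
proof -
  have "((\<lambda>x::real. 1 / sqrt (x * (1 - x))) has_integral
        (arcsin (2 * 1 - 1) - arcsin (2 * 0 - 1))) {0..1}"
  proof (rule fundamental_theorem_of_calculus_interior)
    show "continuous_on {0..1} (\<lambda>x::real. arcsin (2 * x - 1))"
      by (intro continuous_intros) auto
  next
    fix x :: real assume x: "x \<in> {0<..<1}"
    have d: "((\<lambda>x. arcsin (2 * x - 1)) has_real_derivative
          inverse (sqrt (1 - (2 * x - 1)\<^sup>2)) * (2 * 1 - 0)) (at x)"
      using x by (intro DERIV_chain2[OF DERIV_arcsin] derivative_intros) auto
    have "1 - (2 * x - 1)\<^sup>2 = 4 * (x * (1 - x))" by (simp add: power2_eq_square algebra_simps)
    hence "sqrt (1 - (2 * x - 1)\<^sup>2) = sqrt 4 * sqrt (x * (1 - x))"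
      by (simp only: real_sqrt_mult)
    moreover have "sqrt (4::real) = 2" by (simp add: real_sqrt_eq_iff)
    ultimately have "sqrt (1 - (2 * x - 1)\<^sup>2) = 2 * sqrt (x * (1 - x))" by simp
    hence "inverse (sqrt (1 - (2 * x - 1)\<^sup>2)) * (2 * 1 - 0) = 1 / sqrt (x * (1 - x))"
      by (simp add: field_simps)
    thus "((\<lambda>x. arcsin (2 * x - 1)) has_vector_derivative 1 / sqrt (x * (1 - x))) (at x)"
      using d by (simp add: has_real_derivative_iff_has_vector_derivative)
  qed simp
  thus ?thesis by blast
qed

lemma generic:
  fixes R :: "real \<Rightarrow> real"
  assumes cR: "continuous_on {0..1} R" and c: "c > 0"
    and lb: "\<forall>x\<in>{0..1}. c * sqrt (x * (1 - x)) \<le> R x"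
  shows "(\<lambda>x. 1 / R x) integrable_on {0..1}"
    "continuous_on {0..1} (\<lambda>x. integral {x..1} (\<lambda>y. 1 / R y))"
    "\<And>x x'. 0 \<le> x \<Longrightarrow> x < x' \<Longrightarrow> x' \<le> 1 \<Longrightarrow>
        integral {x'..1} (\<lambda>y. 1 / R y) < integral {x..1} (\<lambda>y. 1 / R y)"
proof -
  have Rpos: "R x > 0" if "x \<in> {0<..<1}" for x
  proof -
    have "c * sqrt (x * (1 - x)) > 0" using that c by simp
    moreover have "c * sqrt (x * (1 - x)) \<le> R x" using lb that by auto
    ultimately show ?thesis by linarith
  qed
  have cf: "continuous_on {0<..<1} (\<lambda>x. 1 / R x)"
  proof -
    have nz: "\<forall>x\<in>{0<..<1}. R x \<noteq> 0" using Rpos by (metis less_irrefl)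
    have "continuous_on {0<..<1} R" by (rule continuous_on_subset[OF cR]) auto
    thus ?thesis using nz by (intro continuous_on_divide continuous_on_const)
  qed
  have gi: "(\<lambda>x::real. (1 / c) * (1 / sqrt (x * (1 - x)))) integrable_on {0<..<1}"
  proof -
    have "(\<lambda>x::real. 1 / sqrt (x * (1 - x))) integrable_on {0<..<1}"
      using base_int by (simp only: integrable_on_open_interval_real)
    from integrable_on_cmult_left[OF this, of "1 / c"] show ?thesis by simp
  qed
  have "(\<lambda>x. 1 / R x) integrable_on {0<..<1}"
  proof (rule measurable_bounded_by_integrable_imp_integrable_real[OF _ gi])
    show "(\<lambda>x. 1 / R x) \<in> borel_measurable (lebesgue_on {0<..<1})"
      by (rule continuous_imp_measurable_on_sets_lebesgue[OF cf]) simp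
  next
    fix x :: real assume x: "x \<in> {0<..<1}"
    have s: "c * sqrt (x * (1 - x)) > 0" using x c by simp
    have "\<bar>1 / R x\<bar> = 1 / R x" using Rpos[OF x] by simp
    also have "\<dots> \<le> 1 / (c * sqrt (x * (1 - x)))"
      using lb x s Rpos[OF x] by (intro divide_left_mono) auto
    finally show "\<bar>1 / R x\<bar> \<le> 1 / c * (1 / sqrt (x * (1 - x)))" by simp
  qed simp
  thus fi: "(\<lambda>x. 1 / R x) integrable_on {0..1}" using integrable_on_open_interval_real by blast
  show "continuous_on {0..1} (\<lambda>x. integral {x..1} (\<lambda>y. 1 / R y))"
    by (rule indefinite_integral_continuous_1'[OF fi])
  obtain M0 where M0: "\<forall>x\<in>{0..1}. R x \<le> M0"
    using continuous_attains_sup[OF compact_Icc _ cR] by fastforce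
  define M where "M = max M0 1"
  have M: "M > 0" "\<forall>x\<in>{0..1}. R x \<le> M" using M0 by (auto simp: M_def)
  fix x x' :: real assume xx: "0 \<le> x" "x < x'" "x' \<le> 1"
  have fi2: "(\<lambda>y. 1 / R y) integrable_on {x..x'}"
    using integrable_subinterval_real[OF fi] xx by auto
  have "integral {x..x'} (\<lambda>y. 1 / R y) = integral {x<..<x'} (\<lambda>y. 1 / R y)"
    by (rule integral_open_interval_real)
  also have "\<dots> \<ge> integral {x<..<x'} (\<lambda>y. 1 / M)"
  proof (rule integral_le)
    show "(\<lambda>y. 1 / R y) integrable_on {x<..<x'}" using fi2 integrable_on_open_interval_real by blast
    show "(\<lambda>y. 1 / M) integrable_on {x<..<x'}" using integrable_on_open_interval_real by blast
    fix y assume y: "y \<in> {x<..<x'}"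
    hence "y \<in> {0<..<1}" using xx by auto
    thus "1 / M \<le> 1 / R y" using Rpos M by (intro divide_left_mono) auto
  qed
  also have "integral {x<..<x'} (\<lambda>y. 1 / M) = (x' - x) / M"
    using xx by (simp flip: integral_open_interval_real)
  finally have pos: "integral {x..x'} (\<lambda>y. 1 / R y) > 0" using xx M
    by (smt (verit) divide_pos_pos)
  have "integral {x..x'} (\<lambda>y. 1 / R y) + integral {x'..1} (\<lambda>y. 1 / R y) = integral {x..1} (\<lambda>y. 1 / R y)"
  proof (rule Henstock_Kurzweil_Integration.integral_combine)
    show "(\<lambda>y. 1 / R y) integrable_on {x..1}" using xx by (intro integrable_subinterval_real[OF fi]) auto
  qed (use xx in auto)
  thus "integral {x'..1} (\<lambda>y. 1 / R y) < integral {x..1} (\<lambda>y. 1 / R y)" using pos by linarith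
qed

lemma zeta_props:
  fixes t :: real
  assumes n: "n \<ge> 2" and t: "t > 0"
  shows "continuous_on {0..1} (\<lambda>x. zeta n x t)" "zeta n 1 t = 0"
    "\<And>x x'. 0 \<le> x \<Longrightarrow> x < x' \<Longrightarrow> x' \<le> 1 \<Longrightarrow> zeta n x' t < zeta n x t"
    "Pf n t > 0"
proof -
  obtain c where c: "c > 0" "\<forall>x\<in>{0..1}. c * sqrt (x * (1 - x)) \<le> Rf n x t"
    using R_props(2)[OF n t] by blast
  note G = generic[OF R_props(1)[OF n t] c]
  show "continuous_on {0..1} (\<lambda>x. zeta n x t)" using G(2) by (simp add: zeta_def)
  show z1: "zeta n 1 t = 0" by (simp add: zeta_def)
  show "\<And>x x'. 0 \<le> x \<Longrightarrow> x < x' \<Longrightarrow> x' \<le> 1 \<Longrightarrow> zeta n x' t < zeta n x t"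
    using G(3) by (simp add: zeta_def)
  from G(3)[of 0 1] show "Pf n t > 0" by (simp add: Pf_def zeta_def)
qed

lemma vf_good:
  assumes n: "n \<ge> 2" and d: "d > 0" and t: "t > 0"
  shows "continuous_on {0..d} (\<lambda>z. vf n d z t) \<and> (\<forall>z\<in>{0..d}. vf n d z t > 0)"
proof -
  define Z where "Z = (\<lambda>x. zeta n x t)"
  define P where "P = Pf n t"
  note zp = zeta_props[OF n t, folded Z_def P_def]
  have P0: "Z 0 = P" by (simp add: Z_def P_def Pf_def)
  have inv: "zeta_inv n (Z x) t = x" if x: "x \<in> {0..1}" for x
    unfolding zeta_inv_def
  proof (rule the_equality)
    show "x \<in> {0..1} \<and> zeta n x t = Z x" using x by (simp add: Z_def)
    fix y assume y: "y \<in> {0..1} \<and> zeta n y t = Z x"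
    show "y = x"
    proof (rule ccontr)
      assume "y \<noteq> x"
      hence "y < x \<or> x < y" by linarith
      thus False using zp(3)[of y x] zp(3)[of x y] x y by (auto simp: Z_def)
    qed
  qed
  have ran: "\<exists>x\<in>{0..1}. Z x = s" if s: "s \<in> {0..P}" for s
  proof -
    have "Z 1 = 0" using zp(2) by (simp add: Z_def)
    thus ?thesis using IVT2'[of Z 1 s 0] zp(1) P0 s by auto
  qed
  have cinv: "continuous_on (Z ` {0..1}) (\<lambda>s. zeta_inv n s t)"
    by (rule continuous_on_inv[OF zp(1) compact_Icc]) (use inv in auto)
  have sub: "(\<lambda>z. P * z / d) ` {0..d} \<subseteq> Z ` {0..1}"
  proof
    fix s assume "s \<in> (\<lambda>z. P * z / d) ` {0..d}"
    then obtain z where z: "z \<in> {0..d}" "s = P * z / d" by auto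
    have "P * z \<le> P * d" using z zp(4) by (intro mult_left_mono) auto
    hence "P * z / d \<le> P * d / d" using d by (intro divide_right_mono) auto
    hence "s \<le> P" using d z by simp
    moreover have "s \<ge> 0" using z d zp(4) by simp
    ultimately have "s \<in> {0..P}" by simp
    thus "s \<in> Z ` {0..1}" using ran by force
  qed
  have inr: "zeta_inv n (P * z / d) t \<in> {0..1}" if z: "z \<in> {0..d}" for z
  proof -
    obtain x where "x \<in> {0..1}" "P * z / d = Z x" using sub z by blast
    thus ?thesis using inv by simp
  qed
  have vf_eq: "vf n d z t = d / P * (1 - (1 - t) * zeta_inv n (P * z / d) t)" for z
    by (simp add: vf_def P_def)
  have "continuous_on {0..d} (\<lambda>z. zeta_inv n (P * z / d) t)"
    by (rule continuous_on_compose2[OF cinv _ sub]) (use d in \<open>auto intro!: continuous_intros\<close>)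
  hence c: "continuous_on {0..d} (\<lambda>z. vf n d z t)" unfolding vf_eq by (intro continuous_intros)
  have "vf n d z t > 0" if z: "z \<in> {0..d}" for z
  proof -
    define x where "x = zeta_inv n (P * z / d) t"
    have x: "0 \<le> x" "x \<le> 1" using inr[OF z] by (auto simp: x_def)
    have "1 - (1 - t) * x > 0"
    proof (cases "t \<le> 1")
      case True
      have "(1 - t) * x \<le> (1 - t) * 1" using True x by (intro mult_left_mono) auto
      thus ?thesis using t by simp
    next
      case False
      have "(t - 1) * x \<ge> 0" using False x by simp
      thus ?thesis by (simp add: algebra_simps)
    qed
    thus ?thesis unfolding vf_eq x_def[symmetric] using d zp(4) by simp
  qed
  thus ?thesis using c by blast
qed

lemma V_good:
  assumes "n \<ge> 2" "d > 0" "t > 0"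
  shows "continuous_on {0..d} (\<lambda>z. vf n d z t ^ (n - 1))"
    "integral {0..d} (\<lambda>z. vf n d z t ^ (n - 1)) > 0"
proof -
  note g = vf_good[OF assms]
  show c: "continuous_on {0..d} (\<lambda>z. vf n d z t ^ (n - 1))"
    using g by (intro continuous_intros) auto
  obtain m where m: "m \<in> {0..d}" "\<forall>z\<in>{0..d}. vf n d m t ^ (n - 1) \<le> vf n d z t ^ (n - 1)"
    using continuous_attains_inf[OF compact_Icc _ c] assms(2) by force
  have mp: "vf n d m t ^ (n - 1) > 0" using g m(1) by auto
  have "integral {0..d} (\<lambda>z. vf n d m t ^ (n - 1)) \<le> integral {0..d} (\<lambda>z. vf n d z t ^ (n - 1))"
  proof (rule integral_le)
    show "(\<lambda>z. vf n d z t ^ (n - 1)) integrable_on {0..d}" by (rule integrable_continuous_interval[OF c])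
  qed (use m(2) in auto)
  moreover have "integral {0..d} (\<lambda>z. vf n d m t ^ (n - 1)) > 0"
    using mp assms(2) by simp
  ultimately show "integral {0..d} (\<lambda>z. vf n d z t ^ (n - 1)) > 0" by linarith
qed

theorem lemma5p1:
  fixes n :: nat and d t lam :: real
  assumes "n \<ge> 2" and "d > 0" and "t > 0"
  shows "(\<exists>u. u \<in> Xsp n d 1 \<and> (\<exists>z\<in>{0..d}. u z \<noteq> 0) \<and>
                (\<forall>z\<in>{0..d}. Bop n d t u z = lam * u z))
     \<longleftrightarrow> (\<exists>w. w \<in> Xsp n d t \<and> (\<exists>z\<in>{0..d}. w z \<noteq> 0) \<and>
                (\<forall>z\<in>{0..d}. Atilde n d t w z = lam * w z))"
proof -
  define V1 where "V1 = (\<lambda>z. vf n d z 1 ^ (n - 1))"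
  define Vt where "Vt = (\<lambda>z. vf n d z t ^ (n - 1))"
  define N1 where "N1 = integral {0..d} V1"
  define Nt where "Nt = integral {0..d} Vt"
  define I1 where "I1 = (\<lambda>u. integral {0..d} (\<lambda>y. u y * V1 y))"
  define It where "It = (\<lambda>u. integral {0..d} (\<lambda>y. u y * Vt y))"
  have cV1: "continuous_on {0..d} V1" and N1: "N1 > 0"
    using V_good[OF assms(1,2), of 1] by (auto simp: V1_def N1_def)
  have cVt: "continuous_on {0..d} Vt" and Nt: "Nt > 0"
    using V_good[OF assms] by (auto simp: Vt_def Nt_def)
  have W1: "Wproj n d 1 u = (\<lambda>z. u z - I1 u / N1)" for u
    by (simp add: Wproj_def I1_def N1_def V1_def fun_eq_iff)
  have Wt: "Wproj n d t u = (\<lambda>z. u z - It u / Nt)" for u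
    by (simp add: Wproj_def It_def Nt_def Vt_def fun_eq_iff)
  have X1: "u \<in> Xsp n d 1 \<longleftrightarrow> C2_on d u \<and> I1 u = 0 \<and> D1 d u 0 = 0 \<and> D1 d u d = 0" for u
    by (simp add: Xsp_def I1_def V1_def)
  have Xt: "u \<in> Xsp n d t \<longleftrightarrow> C2_on d u \<and> It u = 0 \<and> D1 d u 0 = 0 \<and> D1 d u d = 0" for u
    by (simp add: Xsp_def It_def Vt_def)
  have lin1: "continuous_on {0..d} u \<Longrightarrow> (\<forall>y\<in>{0..d}. g y = a * u y + b) \<Longrightarrow> I1 g = a * I1 u + b * N1"
    for u g a b
  proof -
    assume c: "continuous_on {0..d} u" and e: "\<forall>y\<in>{0..d}. g y = a * u y + b"
    have "I1 g = integral {0..d} (\<lambda>y. (a * u y + b) * V1 y)"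
      unfolding I1_def by (rule integral_cong) (use e in auto)
    also have "\<dots> = a * I1 u + b * N1" unfolding I1_def N1_def by (rule lin_int[OF cV1 c])
    finally show ?thesis .
  qed
  have lint: "continuous_on {0..d} u \<Longrightarrow> (\<forall>y\<in>{0..d}. g y = a * u y + b) \<Longrightarrow> It g = a * It u + b * Nt"
    for u g a b
  proof -
    assume c: "continuous_on {0..d} u" and e: "\<forall>y\<in>{0..d}. g y = a * u y + b"
    have "It g = integral {0..d} (\<lambda>y. (a * u y + b) * Vt y)"
      unfolding It_def by (rule integral_cong) (use e in auto)
    also have "\<dots> = a * It u + b * Nt" unfolding It_def Nt_def by (rule lin_int[OF cVt c])
    finally show ?thesis .
  qed
  show ?thesis
  proof
    assume "\<exists>u. u \<in> Xsp n d 1 \<and> (\<exists>z\<in>{0..d}. u z \<noteq> 0) \<and> (\<forall>z\<in>{0..d}. Bop n d t u z = lam * u z)"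
    then obtain u z0 where uX: "u \<in> Xsp n d 1" and z0: "z0 \<in> {0..d}" "u z0 \<noteq> 0"
      and eig: "\<forall>z\<in>{0..d}. Bop n d t u z = lam * u z" by blast
    have uC: "C2_on d u" and uI: "I1 u = 0" and ub: "D1 d u 0 = 0" "D1 d u d = 0"
      using uX X1 by auto
    have uc: "continuous_on {0..d} u" using C2_cont[OF uC] .
    define kt where "kt = It u / Nt"
    define w where "w = Wproj n d t u"
    have w: "w = (\<lambda>z. u z - kt)" using Wt kt_def w_def by simp
    have wI: "It w = 0"
      using lint[OF uc, of w 1 "- kt"] Nt by (simp add: w kt_def)
    have wX: "w \<in> Xsp n d t"
      using Xt wI uC ub by (simp add: w C2_minus_const D1_minus_const)
    define g where "g = DH n d (\<lambda>z. vf n d z t) w"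
    define k1 where "k1 = I1 g / N1"
    have ge: "\<forall>z\<in>{0..d}. g z = lam * u z + k1"
      using eig by (auto simp: Bop_def W1 g_def k1_def w_def)
    have gI: "It g = lam * It u + k1 * Nt" using lint[OF uc ge] .
    have "\<forall>z\<in>{0..d}. Atilde n d t w z = lam * w z"
    proof
      fix z assume z: "z \<in> {0..d}"
      have "Atilde n d t w z = g z - It g / Nt" by (simp add: Atilde_def Wt g_def)
      also have "\<dots> = lam * w z" using ge z gI Nt by (simp add: w kt_def field_simps)
      finally show "Atilde n d t w z = lam * w z" .
    qed
    moreover have "\<exists>z\<in>{0..d}. w z \<noteq> 0"
    proof (rule ccontr)
      assume "\<not> (\<exists>z\<in>{0..d}. w z \<noteq> 0)"
      hence e: "\<forall>z\<in>{0..d}. u z = 0 * u z + kt" by (auto simp: w)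
      have "I1 u = 0 * I1 u + kt * N1" using lin1[OF uc e] .
      hence "kt = 0" using uI N1 by simp
      thus False using e z0 by auto
    qed
    ultimately show "\<exists>w. w \<in> Xsp n d t \<and> (\<exists>z\<in>{0..d}. w z \<noteq> 0) \<and> (\<forall>z\<in>{0..d}. Atilde n d t w z = lam * w z)"
      using wX by blast
  next
    assume "\<exists>w. w \<in> Xsp n d t \<and> (\<exists>z\<in>{0..d}. w z \<noteq> 0) \<and> (\<forall>z\<in>{0..d}. Atilde n d t w z = lam * w z)"
    then obtain w z0 where wX: "w \<in> Xsp n d t" and z0: "z0 \<in> {0..d}" "w z0 \<noteq> 0"
      and eig: "\<forall>z\<in>{0..d}. Atilde n d t w z = lam * w z" by blast
    have wC: "C2_on d w" and wI: "It w = 0" and wb: "D1 d w 0 = 0" "D1 d w d = 0"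
      using wX Xt by auto
    have wc: "continuous_on {0..d} w" using C2_cont[OF wC] .
    define k1 where "k1 = I1 w / N1"
    define u where "u = Wproj n d 1 w"
    have u: "u = (\<lambda>z. w z - k1)" using W1 k1_def u_def by simp
    have uI: "I1 u = 0"
      using lin1[OF wc, of u 1 "- k1"] N1 by (simp add: u k1_def)
    have uX: "u \<in> Xsp n d 1"
      using X1 uI wC wb by (simp add: u C2_minus_const D1_minus_const)
    have uIt: "It u = - k1 * Nt"
      using lint[OF wc, of u 1 "- k1"] wI by (simp add: u)
    have Wtu: "Wproj n d t u = w"
      unfolding Wt uIt using Nt by (simp add: u)
    define g where "g = DH n d (\<lambda>z. vf n d z t) w"
    define kt where "kt = It g / Nt"
    have ge: "\<forall>z\<in>{0..d}. g z = lam * w z + kt"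
      using eig by (auto simp: Atilde_def Wt g_def kt_def)
    have gI: "I1 g = lam * I1 w + kt * N1" using lin1[OF wc ge] .
    have "\<forall>z\<in>{0..d}. Bop n d t u z = lam * u z"
    proof
      fix z assume z: "z \<in> {0..d}"
      have "Bop n d t u z = g z - I1 g / N1" by (simp add: Bop_def Wtu W1 g_def)
      also have "\<dots> = lam * u z" using ge z gI N1 by (simp add: u k1_def field_simps)
      finally show "Bop n d t u z = lam * u z" .
    qed
    moreover have "\<exists>z\<in>{0..d}. u z \<noteq> 0"
    proof (rule ccontr)
      assume "\<not> (\<exists>z\<in>{0..d}. u z \<noteq> 0)"
      hence e: "\<forall>z\<in>{0..d}. w z = 0 * w z + k1" by (auto simp: u)
      have "It w = 0 * It w + k1 * Nt" using lint[OF wc e] .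
      hence "k1 = 0" using wI Nt by simp
      thus False using e z0 by auto
    qed
    ultimately show "\<exists>u. u \<in> Xsp n d 1 \<and> (\<exists>z\<in>{0..d}. u z \<noteq> 0) \<and> (\<forall>z\<in>{0..d}. Bop n d t u z = lam * u z)"
      using uX by blast
  qed
qed

end
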